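(* For all integers $n\ge0$ and $p\ge0$, $$\mathcal{B}_{n,p}=\sum_{k=0}^{n+p}\binom{n+p}{k}\binom{n+p}{p}^{-1}\phi_{n+p-k}\,B_k^{(p)}-\sum_{k=1}^{p}\binom{n+k}{k}^{-1}\binom{p}{k}B_{n+k}^{(k)}.$$
   Context: $\phi_m$ denotes the $m$-th Bell number. The generalized Bernoulli numbers $B_m^{(\alpha)}$ are defined by $\left(\frac{t}{e^t-1}\right)^\alpha=\sum_{m\ge0}B_m^{(\alpha)}\frac{t^m}{m!}$. For an integer $p\ge0$, the $p$-Bell numbers $\mathcal{B}_{n,p}$ are defined by $\sum_{n\ge0}\mathcal{B}_{n,p}\frac{z^n}{n!}=\sum_{n\ge0}\binom{n+p}{p}^{-1}\frac{(e^z-1)^n}{n!}$. *)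

theory Defs
  imports "HOL-Combinatorics.Stirling" "HOL-Computational_Algebra.Formal_Power_Series"
begin

definition bell :: "nat \<Rightarrow> nat" where
  "bell m = (\<Sum>k\<le>m. Stirling m k)"

text \<open>The formal power series t/(e^t - 1), i.e. the inverse of (e^t - 1)/t.\<close>
definition bernoulli_fps :: "real fps" where
  "bernoulli_fps = inverse (fps_shift 1 (fps_exp 1 - 1))"

definition gen_bernoulli :: "nat \<Rightarrow> nat \<Rightarrow> real" where
  "gen_bernoulli m \<alpha> = fact m * fps_nth (bernoulli_fps ^ \<alpha>) m"

text \<open>Exponential generating function of the p-Bell numbers:
  sum_n binom(n+p,p)^(-1) (e^z-1)^n / n!, taken coefficientwise (each coefficient
  sum has only finitely many nonzero terms since (e^z-1)^n has subdegree n).\<close>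
definition pbell_egf :: "nat \<Rightarrow> real fps" where
  "pbell_egf p = Abs_fps (\<lambda>m. \<Sum>j. fps_nth
      (fps_const (inverse (real ((j + p) choose p)) / fact j) * (fps_exp 1 - 1) ^ j) m)"

definition pbell :: "nat \<Rightarrow> nat \<Rightarrow> real" where
  "pbell n p = fact n * fps_nth (pbell_egf p) n"

end

theory Submission imports Defs begin
unbundle fps_syntax

definition EE :: "real fps" where "EE = fps_exp 1 - 1"
definition SS :: "real fps" where "SS = fps_shift 1 EE"

lemma EE_eq: "EE = fps_X * SS"
  by (rule fps_ext) (auto simp: EE_def SS_def)

lemma SS0: "SS $ 0 = 1" by (simp add: SS_def EE_def)

lemma bern_SS: "bernoulli_fps * SS = 1"
  unfolding bernoulli_fps_def SS_def[symmetric] EE_def[symmetric]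
  by (rule inverse_mult_eq_1) (simp add: SS0)

lemma EE_pow_nth_less: "m < j \<Longrightarrow> (EE ^ j) $ m = 0"
  by (simp add: EE_eq power_mult_distrib fps_X_power_mult_nth)

lemma deriv_EE: "fps_deriv EE = EE + 1" by (simp add: EE_def)

lemma EE_pow_nth: "(EE ^ j) $ m * fact m = fact j * real (Stirling m j)"
proof (induction m arbitrary: j)
  case 0
  then show ?case by (cases j) (auto simp: EE_def)
next
  case (Suc m)
  show ?case
  proof (cases j)
    case 0 then show ?thesis by simp
  next
    case (Suc i)
    have "fps_deriv (EE ^ Suc i) = fps_const (of_nat (Suc i)) * (EE + 1) * EE ^ i"
      by (subst fps_deriv_power) (simp add: deriv_EE)
    also have "\<dots> = fps_const (of_nat (Suc i)) * (EE ^ Suc i + EE ^ i)"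
      by (simp add: algebra_simps)
    finally have "fps_deriv (EE ^ Suc i) $ m = (fps_const (of_nat (Suc i)) * (EE ^ Suc i + EE ^ i)) $ m"
      by simp
    hence d: "of_nat (m + 1) * (EE ^ Suc i) $ (m + 1) = of_nat (Suc i) * ((EE ^ Suc i) $ m + (EE ^ i) $ m)"
      by (simp only: fps_deriv_nth fps_mult_left_const_nth fps_add_nth)
    have "(EE ^ Suc i) $ Suc m * fact (Suc m) = fact m * (of_nat (m + 1) * (EE ^ Suc i) $ (m + 1))"
      by (simp del: power_Suc add: algebra_simps)
    also have "\<dots> = fact m * (of_nat (Suc i) * ((EE ^ Suc i) $ m + (EE ^ i) $ m))"
      by (simp only: d)
    also have "\<dots> = of_nat (Suc i) * ((EE ^ Suc i) $ m * fact m + (EE ^ i) $ m * fact m)"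
      by (simp del: power_Suc add: algebra_simps)
    also have "\<dots> = of_nat (Suc i) * (fact (Suc i) * real (Stirling m (Suc i)) + fact i * real (Stirling m i))"
      using Suc.IH[of "Suc i"] Suc.IH[of i] by simp
    also have "\<dots> = fact (Suc i) * real (Stirling (Suc m) (Suc i))"
      by (simp add: algebra_simps)
    finally show ?thesis using Suc by simp
  qed
qed


lemma shift_sum:
  fixes f :: "nat \<Rightarrow> 'a::ab_group_add"
  shows "(\<Sum>j\<le>n. f (j+p)) = (\<Sum>i<n+p+1. f i) - (\<Sum>i<p. f i)"
  by (induction n) (simp_all add: algebra_simps)

lemma pbell_nth: "pbell_egf p $ m = (\<Sum>j\<le>m. fact p / fact (j+p) * (EE^j) $ m)"
proof -
  have "pbell_egf p $ m = (\<Sum>j. inverse (real ((j + p) choose p)) / fact j * (EE^j) $ m)"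
    by (simp add: pbell_egf_def EE_def)
  also have "\<dots> = (\<Sum>j\<le>m. inverse (real ((j + p) choose p)) / fact j * (EE^j) $ m)"
    by (rule suminf_finite) (auto simp: EE_pow_nth_less)
  also have "\<dots> = (\<Sum>j\<le>m. fact p / fact (j+p) * (EE^j) $ m)"
  proof (rule sum.cong[OF refl])
    fix j
    have "real ((j + p) choose p) = fact (j+p) / (fact p * fact j)"
      by (subst binomial_fact) auto
    then show "inverse (real ((j + p) choose p)) / fact j * (EE^j) $ m = fact p / fact (j+p) * (EE^j) $ m"
      by (simp add: field_simps)
  qed
  finally show ?thesis .
qed

lemma T_nth:
  assumes "m \<le> N"
  shows "(\<Sum>i<N+1. fps_const (1/fact i) * EE^i :: real fps) $ m = real (bell m) / fact m"
proof -
  have "(\<Sum>i<N+1. fps_const (1/fact i) * EE^i :: real fps) $ m = (\<Sum>i<N+1. real (Stirling m i) / fact m)"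
    unfolding fps_sum_nth
  proof (rule sum.cong[OF refl])
    fix i
    have "(EE ^ i) $ m * fact m = fact i * real (Stirling m i)" by (rule EE_pow_nth)
    then show "(fps_const (1 / fact i) * EE ^ i) $ m = real (Stirling m i) / fact m"
      by (simp add: field_simps)
  qed
  also have "\<dots> = (\<Sum>i\<le>m. real (Stirling m i) / fact m)"
    by (rule sum.mono_neutral_right) (use assms in auto)
  also have "\<dots> = real (bell m) / fact m"
    by (simp add: bell_def sum_divide_distrib)
  finally show ?thesis .
qed


theorem mainTheorem18:
  fixes n p :: nat
  shows "pbell n p =
    (\<Sum>k=0..n+p. real ((n+p) choose k) * inverse (real ((n+p) choose p))
        * real (bell (n+p-k)) * gen_bernoulli k p)
    - (\<Sum>k=1..p. inverse (real ((n+k) choose k)) * real (p choose k) * gen_bernoulli (n+k) k)"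
proof -
  define GM where "GM = (\<Sum>j\<le>n. fps_const (fact p / fact (j+p)) * EE^j)"
  define T where "T = (\<Sum>i<n+p+1. fps_const (1/fact i) * EE^i :: real fps)"
  define P where "P = (\<Sum>i<p. fps_const (1/fact i) * EE^i :: real fps)"
  define \<beta> where "\<beta> = bernoulli_fps"
  have \<beta>S: "\<beta> * SS = 1" using bern_SS by (simp add: \<beta>_def)
  have pb: "pbell n p = fact n * GM $ n"
    by (simp add: pbell_def pbell_nth GM_def fps_sum_nth)
  have 1: "EE^p * GM = fps_const (fact p) * (T - P)"
  proof -
    have "EE^p * GM = (\<Sum>j\<le>n. fps_const (fact p) * (fps_const (1 / fact (j+p)) * EE^(j+p)))"
      unfolding GM_def sum_distrib_left
      by (rule sum.cong[OF refl]) (simp add: power_add fps_const_mult[symmetric] algebra_simps)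
    also have "\<dots> = fps_const (fact p) * (\<Sum>j\<le>n. fps_const (1 / fact (j+p)) * EE^(j+p))"
      by (simp add: sum_distrib_left)
    also have "\<dots> = fps_const (fact p) * (T - P)"
      unfolding T_def P_def by (subst shift_sum[where f = "\<lambda>i. fps_const (1 / fact i) * EE^i"]) simp
    finally show ?thesis .
  qed
  have bP: "\<beta>^p * P = (\<Sum>i<p. fps_const (1/fact i) * (fps_X^i * \<beta>^(p-i)))"
    unfolding P_def sum_distrib_left
  proof (rule sum.cong[OF refl])
    fix i assume "i \<in> {..<p}"
    hence "\<beta>^p = \<beta>^(p-i) * \<beta>^i" by (simp add: power_add[symmetric])
    moreover have "\<beta>^i * SS^i = 1" by (simp add: power_mult_distrib[symmetric] \<beta>S)
    moreover have "EE^i = fps_X^i * SS^i" by (simp add: EE_eq power_mult_distrib)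
    ultimately show "\<beta>^p * (fps_const (1/fact i) * EE^i) = fps_const (1/fact i) * (fps_X^i * \<beta>^(p-i))"
      by (metis (no_types, lifting) mult.assoc mult.commute mult.left_commute mult_1_right)
  qed
  have 2: "fps_X^p * GM = fps_const (fact p) * (\<beta>^p * T - (\<Sum>i<p. fps_const (1/fact i) * (fps_X^i * \<beta>^(p-i))))"
  proof -
    have "\<beta>^p * SS^p = 1" by (simp add: power_mult_distrib[symmetric] \<beta>S)
    hence "fps_X^p * GM = \<beta>^p * (EE^p * GM)"
      by (simp add: EE_eq power_mult_distrib)
    also have "\<dots> = fps_const (fact p) * (\<beta>^p * T - \<beta>^p * P)"
      by (simp only: 1) (simp add: algebra_simps)
    finally show ?thesis by (simp add: bP)
  qed
  have 3: "GM $ n = fact p * ((\<beta>^p * T) $ (n+p) - (\<Sum>i<p. 1/fact i * (\<beta>^(p-i)) $ (n+p-i)))"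
  proof -
    have "(fps_X^p * GM) $ (n+p) = GM $ n" by (simp add: fps_X_power_mult_nth)
    moreover have "(\<Sum>i<p. fps_const (1/fact i) * (fps_X^i * \<beta>^(p-i))) $ (n+p)
        = (\<Sum>i<p. 1/fact i * (\<beta>^(p-i)) $ (n+p-i))"
      unfolding fps_sum_nth by (rule sum.cong[OF refl]) (simp add: fps_X_power_mult_nth)
    ultimately show ?thesis using arg_cong[OF 2, of "\<lambda>f. f $ (n+p)"] by simp
  qed
  have 4: "(\<beta>^p * T) $ (n+p) = (\<Sum>k=0..n+p. gen_bernoulli k p / fact k * (real (bell (n+p-k)) / fact (n+p-k)))"
    unfolding fps_mult_nth
  proof (rule sum.cong[OF refl])
    fix k assume "k \<in> {0..n+p}"
    hence "T $ (n+p-k) = real (bell (n+p-k)) / fact (n+p-k)"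
      unfolding T_def by (intro T_nth) auto
    then show "(\<beta>^p) $ k * T $ (n+p-k) = gen_bernoulli k p / fact k * (real (bell (n+p-k)) / fact (n+p-k))"
      by (simp add: gen_bernoulli_def \<beta>_def)
  qed
  have 5: "(\<Sum>i<p. 1/fact i * (\<beta>^(p-i)) $ (n+p-i)) = (\<Sum>k=1..p. 1/fact (p-k) * (\<beta>^k) $ (n+k))"
    by (rule sum.reindex_bij_witness[of _ "\<lambda>k. p-k" "\<lambda>i. p-i"]) auto
  have A: "fact n * fact p * (gen_bernoulli k p / fact k * (real (bell (n+p-k)) / fact (n+p-k)))
      = real ((n+p) choose k) * inverse (real ((n+p) choose p)) * real (bell (n+p-k)) * gen_bernoulli k p"
    if "k \<le> n+p" for k
  proof -
    have "real ((n+p) choose k) = fact (n+p) / (fact k * fact (n+p-k))"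
      using that by (subst binomial_fact) auto
    moreover have "real ((n+p) choose p) = fact (n+p) / (fact p * fact n)"
      by (subst binomial_fact) auto
    ultimately show ?thesis by (simp only:) (simp add: field_simps)
  qed
  have B: "fact n * fact p * (1/fact (p-k) * (\<beta>^k) $ (n+k))
      = inverse (real ((n+k) choose k)) * real (p choose k) * gen_bernoulli (n+k) k"
    if "k \<le> p" for k
  proof -
    have "real ((n+k) choose k) = fact (n+k) / (fact k * fact n)"
      by (subst binomial_fact) auto
    moreover have "real (p choose k) = fact p / (fact k * fact (p-k))"
      using that by (subst binomial_fact) auto
    ultimately show ?thesis by (simp only:) (simp add: field_simps gen_bernoulli_def \<beta>_def)
  qed
  have "pbell n p = fact n * fact p * (\<Sum>k=0..n+p. gen_bernoulli k p / fact k * (real (bell (n+p-k)) / fact (n+p-k)))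
      - fact n * fact p * (\<Sum>k=1..p. 1/fact (p-k) * (\<beta>^k) $ (n+k))"
    unfolding pb 3 4 5 by (simp add: algebra_simps)
  also have "\<dots> = (\<Sum>k=0..n+p. real ((n+p) choose k) * inverse (real ((n+p) choose p))
        * real (bell (n+p-k)) * gen_bernoulli k p)
    - (\<Sum>k=1..p. inverse (real ((n+k) choose k)) * real (p choose k) * gen_bernoulli (n+k) k)"
    unfolding sum_distrib_left
    by (intro arg_cong2[where f = "(-)"] sum.cong refl A B) auto
  finally show ?thesis .
qed
end
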